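(* Let $L$ be an $R_0$-algebra, $k\in[0,1)$, and $\mu:L\to[0,1]$ a fuzzy subset. The following are equivalent: (1) $\mu$ is an $(\in,\in\vee q_k)$-fuzzy fated filter of $L$; (2) for every $t\in(0,1]$, the set $[\mu]_t^k=\{x\in L\mid \mu(x)\ge t \text{ or } \mu(x)+t+k>1\}$ is either empty or a fated filter of $L$.
   Context: An $R_0$-algebra is a bounded distributive lattice $(L,\wedge,\vee,0,1)$ with an order-reversing involution $\neg$ and a binary operation $\to$ such that for all $x,y,z\in L$: $x\to y=\neg y\to\neg x$; $1\to x=x$; $(y\to z)\wedge((x\to y)\to(x\to z))=y\to z$; $x\to(y\to z)=y\to(x\to z)$; $x\to(y\vee z)=(x\to y)\vee(x\to z)$; $(x\to y)\vee((x\to y)\to(\neg x\vee y))=1$. A fated filter of $L$ is a nonempty subset $A\subseteq L$ with $1\in A$ such that for all $x,y\in L$ and $a\in A$, $a\to((x\to y)\to x)\in A$ implies $x\in A$. For $x\in L$, $t\in(0,1]$: $x_t\in\mu$ iff $\mu(x)\ge t$; $x_t\,q_k\,\mu$ iff $\mu(x)+t+k>1$; $x_t\in\vee q_k\,\mu$ iff $x_t\in\mu$ or $x_t\,q_k\,\mu$. $\mu$ is an $(\in,\in\vee q_k)$-fuzzy fated filter of $L$ if (i) for all $x\in L$, $t\in(0,1]$: $x_t\in\mu\Rightarrow 1_t\in\vee q_k\,\mu$; and (ii) for all $x,a,y\in L$, $t,s\in(0,1]$: if $(a\to((x\to y)\to x))_t\in\mu$ and $a_s\in\mu$ then $x_{\min\{t,s\}}\in\vee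 q_k\,\mu$. *)

theory Defs
  imports Main "HOL.Real"
begin

text \<open>An R0-algebra: the carrier is the whole type 'a, which is a bounded distributive
lattice (bot = 0, top = 1, inf, sup); neg is an order-reversing involution and imp the
binary operation, subject to the R0 axioms.\<close>

definition R0_algebra :: "('a::{bounded_lattice,distrib_lattice} \<Rightarrow> 'a) \<Rightarrow> ('a \<Rightarrow> 'a \<Rightarrow> 'a) \<Rightarrow> bool" where
  "R0_algebra neg imp \<longleftrightarrow>
     (\<forall>x. neg (neg x) = x) \<and>
     (\<forall>x y. x \<le> y \<longrightarrow> neg y \<le> neg x) \<and>
     (\<forall>x y. imp x y = imp (neg y) (neg x)) \<and>
     (\<forall>x. imp top x = x) \<and>
     (\<forall>x y z. inf (imp y z) (imp (imp x y) (imp x z)) = imp y z) \<and>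
     (\<forall>x y z. imp x (imp y z) = imp y (imp x z)) \<and>
     (\<forall>x y z. imp x (sup y z) = sup (imp x y) (imp x z)) \<and>
     (\<forall>x y. sup (imp x y) (imp (imp x y) (sup (neg x) y)) = top)"

definition fated_filter :: "('a::{bounded_lattice,distrib_lattice} \<Rightarrow> 'a \<Rightarrow> 'a) \<Rightarrow> 'a set \<Rightarrow> bool" where
  "fated_filter imp A \<longleftrightarrow>
     A \<noteq> {} \<and> top \<in> A \<and>
     (\<forall>x y a. a \<in> A \<longrightarrow> imp a (imp (imp x y) x) \<in> A \<longrightarrow> x \<in> A)"

definition fp_in :: "('a \<Rightarrow> real) \<Rightarrow> 'a \<Rightarrow> real \<Rightarrow> bool" where
  "fp_in \<mu> x t \<longleftrightarrow> \<mu> x \<ge> t"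

definition fp_q :: "real \<Rightarrow> ('a \<Rightarrow> real) \<Rightarrow> 'a \<Rightarrow> real \<Rightarrow> bool" where
  "fp_q k \<mu> x t \<longleftrightarrow> \<mu> x + t + k > 1"

definition fp_in_or_q :: "real \<Rightarrow> ('a \<Rightarrow> real) \<Rightarrow> 'a \<Rightarrow> real \<Rightarrow> bool" where
  "fp_in_or_q k \<mu> x t \<longleftrightarrow> fp_in \<mu> x t \<or> fp_q k \<mu> x t"

definition in_q_fuzzy_fated_filter ::
  "('a::{bounded_lattice,distrib_lattice} \<Rightarrow> 'a \<Rightarrow> 'a) \<Rightarrow> real \<Rightarrow> ('a \<Rightarrow> real) \<Rightarrow> bool" where
  "in_q_fuzzy_fated_filter imp k \<mu> \<longleftrightarrow>
     (\<forall>x t. 0 < t \<and> t \<le> 1 \<longrightarrow> fp_in \<mu> x t \<longrightarrow> fp_in_or_q k \<mu> top t) \<and>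
     (\<forall>x a y t s. 0 < t \<and> t \<le> 1 \<and> 0 < s \<and> s \<le> 1 \<longrightarrow>
        fp_in \<mu> (imp a (imp (imp x y) x)) t \<longrightarrow> fp_in \<mu> a s \<longrightarrow>
        fp_in_or_q k \<mu> x (min t s))"

definition level_set_k :: "real \<Rightarrow> ('a \<Rightarrow> real) \<Rightarrow> real \<Rightarrow> 'a set" where
  "level_set_k k \<mu> t = {x. \<mu> x \<ge> t \<or> \<mu> x + t + k > 1}"

end

theory Submission
  imports Defs
begin

theorem theorem3p24:
  fixes neg :: "'a::{bounded_lattice,distrib_lattice} \<Rightarrow> 'a"
    and imp :: "'a \<Rightarrow> 'a \<Rightarrow> 'a"
    and k :: real and \<mu> :: "'a \<Rightarrow> real"
  assumes "R0_algebra neg imp"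
    and "0 \<le> k" and "k < 1"
    and "\<forall>x. 0 \<le> \<mu> x \<and> \<mu> x \<le> 1"
  shows "in_q_fuzzy_fated_filter imp k \<mu> \<longleftrightarrow>
         (\<forall>t. 0 < t \<and> t \<le> 1 \<longrightarrow>
            level_set_k k \<mu> t = {} \<or> fated_filter imp (level_set_k k \<mu> t))"
proof
  assume H: "in_q_fuzzy_fated_filter imp k \<mu>"
  have A: "\<mu> top \<ge> min (\<mu> x) ((1-k)/2)" for x
  proof (cases "\<mu> x = 0")
    case True then show ?thesis using assms(4) by (metis min.coboundedI1)
  next
    case False
    define t' where "t' = min (\<mu> x) ((1-k)/2)"
    have mx: "0 \<le> \<mu> x" "\<mu> x \<le> 1" using assms(4) by auto
    have "0 < t'" using False assms(3) mx by (auto simp: t'_def min_def)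
    moreover have "t' \<le> 1" using mx unfolding t'_def by linarith
    moreover have "fp_in \<mu> x t'" by (simp add: fp_in_def t'_def)
    ultimately have "fp_in_or_q k \<mu> top t'" using H unfolding in_q_fuzzy_fated_filter_def by blast
    moreover have "t' \<le> (1-k)/2" unfolding t'_def by linarith
    ultimately show ?thesis unfolding fp_in_or_q_def fp_in_def fp_q_def t'_def[symmetric]
      by - (erule disjE; simp add: field_simps)
  qed
  have B: "\<mu> x \<ge> min (min (\<mu> (imp a (imp (imp x y) x))) (\<mu> a)) ((1-k)/2)" for x y a
  proof -
    define t' where "t' = min (min (\<mu> (imp a (imp (imp x y) x))) (\<mu> a)) ((1-k)/2)"
    show ?thesis
    proof (cases "t' \<le> 0")
      case True then show ?thesis using assms(4) t'_def by (metis order_trans)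
    next
      case False
      have "\<mu> a \<le> 1" using assms(4) by auto
      then have "t' \<le> 1" unfolding t'_def by linarith
      moreover have "fp_in \<mu> (imp a (imp (imp x y) x)) t'" "fp_in \<mu> a t'"
        by (auto simp add: fp_in_def t'_def)
      ultimately have "fp_in_or_q k \<mu> x (min t' t')" using H False
        unfolding in_q_fuzzy_fated_filter_def by (meson not_less)
      moreover have "t' \<le> (1-k)/2" unfolding t'_def by linarith
      ultimately have "t' \<le> \<mu> x"  unfolding fp_in_or_q_def fp_in_def fp_q_def min.idem
        by - (erule disjE; simp add: field_simps)
      then show ?thesis unfolding t'_def .
    qed
  qed
  show "\<forall>t. 0 < t \<and> t \<le> 1 \<longrightarrow>
            level_set_k k \<mu> t = {} \<or> fated_filter imp (level_set_k k \<mu> t)"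
  proof (intro allI impI)
    fix t :: real assume t: "0 < t \<and> t \<le> 1"
    let ?g = "\<lambda>v. v \<ge> t \<or> v + t + k > 1"
    have half: "?g ((1-k)/2)" by (auto simp: field_simps)
    have up: "?g w" if "?g v" "v \<le> w" for v w using that by auto
    have mn: "?g (min v w)" if "?g v" "?g w" for v w using that by (auto simp: min_def)
    have mem: "x \<in> level_set_k k \<mu> t \<longleftrightarrow> ?g (\<mu> x)" for x by (simp add: level_set_k_def)
    show "level_set_k k \<mu> t = {} \<or> fated_filter imp (level_set_k k \<mu> t)"
    proof (cases "level_set_k k \<mu> t = {}")
      case False
      then obtain x where "x \<in> level_set_k k \<mu> t" by blast
      then have "?g (\<mu> x)" using mem by blast
      then have "?g (\<mu> top)" using A[of x] up mn half by blast
      then have T: "top \<in> level_set_k k \<mu> t" using mem by blast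
      have "x \<in> level_set_k k \<mu> t" if "a \<in> level_set_k k \<mu> t"
           "imp a (imp (imp x y) x) \<in> level_set_k k \<mu> t" for x y a
      proof -
        have "?g (\<mu> a)" "?g (\<mu> (imp a (imp (imp x y) x)))" using that mem by blast+
        then have "?g (min (min (\<mu> (imp a (imp (imp x y) x))) (\<mu> a)) ((1-k)/2))"
          using mn half by blast
        then show ?thesis using B[of a x y] up mem by blast
      qed
      then show ?thesis using T unfolding fated_filter_def by blast
    qed simp
  qed
next
  assume H: "\<forall>t. 0 < t \<and> t \<le> 1 \<longrightarrow>
            level_set_k k \<mu> t = {} \<or> fated_filter imp (level_set_k k \<mu> t)"
  show "in_q_fuzzy_fated_filter imp k \<mu>"
    unfolding in_q_fuzzy_fated_filter_def
  proof (intro conjI allI impI)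
    fix x t assume t: "0 < t \<and> t \<le> 1" and "fp_in \<mu> x t"
    then have "x \<in> level_set_k k \<mu> t" by (simp add: level_set_k_def fp_in_def)
    then have "fated_filter imp (level_set_k k \<mu> t)" using H t by blast
    then show "fp_in_or_q k \<mu> top t"
      by (auto simp: fated_filter_def level_set_k_def fp_in_or_q_def fp_in_def fp_q_def)
  next
    fix x a y t s assume ts: "0 < t \<and> t \<le> 1 \<and> 0 < s \<and> s \<le> 1"
      and h1: "fp_in \<mu> (imp a (imp (imp x y) x)) t" and h2: "fp_in \<mu> a s"
    let ?r = "min t s"
    have r: "0 < ?r \<and> ?r \<le> 1" using ts by auto
    have m1: "imp a (imp (imp x y) x) \<in> level_set_k k \<mu> ?r" and m2: "a \<in> level_set_k k \<mu> ?r"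
      using h1 h2 by (auto simp: level_set_k_def fp_in_def)
    then have "fated_filter imp (level_set_k k \<mu> ?r)" using H r by blast
    then have "x \<in> level_set_k k \<mu> ?r" using m1 m2 unfolding fated_filter_def by blast
    then show "fp_in_or_q k \<mu> x ?r"
      by (auto simp: level_set_k_def fp_in_or_q_def fp_in_def fp_q_def)
  qed
qed

end
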